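(* Let $F_1,F_2$ be two real quadratic forms on $\mathbf{R}^n$ such that $\alpha F_1+\beta F_2$ is strictly hyperbolic for every $(\alpha,\beta)\in\mathbf{R}^2\setminus\{0\}$. Then there exist $C>0$ and a positive quadratic form $Q\in K_C$ with $\mathrm{Tr}(F_1Q)=\mathrm{Tr}(F_2Q)=0$.
   Context: Quadratic forms are identified with real symmetric $n\times n$ matrices. A symmetric matrix $A$ with largest eigenvalue $\lambda_{\max}(A)$ and smallest eigenvalue $\lambda_{\min}(A)$ is strictly hyperbolic if $1/M<-\lambda_{\max}(A)/\lambda_{\min}(A)<M$ for some $M>0$ (in particular $\lambda_{\max}>0>\lambda_{\min}$). For $C>0$, $K_C$ is the set of symmetric matrices $(a_{ij})$ with $C^{-1}|\xi|^2\le\sum a_{ij}\xi_i\xi_j\le C|\xi|^2$ for all $\xi\in\mathbf{R}^n$. *)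

theory Defs
  imports "HOL-Analysis.Analysis"
begin

text \<open>Real quadratic forms on R^n are identified with real symmetric n x n matrices.\<close>

definition symmetric_mat :: "real^'n^'n \<Rightarrow> bool" where
  "symmetric_mat A \<longleftrightarrow> transpose A = A"

definition is_eigenvalue :: "real^'n^'n \<Rightarrow> real \<Rightarrow> bool" where
  "is_eigenvalue A l \<longleftrightarrow> (\<exists>v. v \<noteq> 0 \<and> A *v v = l *\<^sub>R v)"

definition lambda_max :: "real^'n^'n \<Rightarrow> real" where
  "lambda_max A = Max {l. is_eigenvalue A l}"

definition lambda_min :: "real^'n^'n \<Rightarrow> real" where
  "lambda_min A = Min {l. is_eigenvalue A l}"

definition strictly_hyperbolic :: "real^'n^'n \<Rightarrow> bool" where
  "strictly_hyperbolic A \<longleftrightarrow> symmetric_mat A \<and>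
     (\<exists>M>0. 1 / M < - lambda_max A / lambda_min A \<and> - lambda_max A / lambda_min A < M)"

definition K :: "real \<Rightarrow> (real^'n^'n) set" where
  "K C = {A. symmetric_mat A \<and>
     (\<forall>\<xi>::real^'n. inverse C * (norm \<xi>)\<^sup>2 \<le> \<xi> \<bullet> (A *v \<xi>) \<and> \<xi> \<bullet> (A *v \<xi>) \<le> C * (norm \<xi>)\<^sup>2)}"

end

theory Submission
  imports Defs
begin

lemma sym_inner:
  fixes G :: "real^'n^'n"
  assumes "symmetric_mat G"
  shows "x \<bullet> (G *v y) = y \<bullet> (G *v x)"
proof -
  have "x \<bullet> (G *v y) = (x v* G) \<bullet> y" by (simp add: dot_lmul_matrix)
  also have "x v* G = transpose G *v x" by simp
  also have "\<dots> = G *v x" using assms by (simp add: symmetric_mat_def)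
  finally show ?thesis by (simp add: inner_commute)
qed

lemma quad_min:
  fixes G :: "real^'n^'n"
  shows "\<exists>x. norm x = 1 \<and> (\<forall>z. (x \<bullet> (G *v x)) * (norm z)\<^sup>2 \<le> z \<bullet> (G *v z))"
proof -
  let ?f = "\<lambda>x. x \<bullet> (G *v x)"
  have ne: "sphere (0::real^'n) 1 \<noteq> {}"
    using vector_choose_size[of 1] by auto
  have cont: "continuous_on (sphere 0 1) ?f"
  proof -
    have "bounded_linear ((*v) G)" by (simp add: linear_linear matrix_vector_mul_linear)
    then show ?thesis by (intro continuous_intros linear_continuous_on)
  qed
  obtain x where x: "x \<in> sphere 0 1" "\<forall>y\<in>sphere 0 1. ?f x \<le> ?f y"
    using continuous_attains_inf[OF compact_sphere ne cont] by blast
  have "?f x * (norm z)\<^sup>2 \<le> ?f z" for z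
  proof (cases "z = 0")
    case True then show ?thesis by simp
  next
    case False
    let ?u = "inverse (norm z) *\<^sub>R z"
    have "norm ?u = 1" using False by simp
    then have "?u \<in> sphere 0 1" by simp
    with x(2) have "?f x \<le> ?f ?u" by blast
    also have "?f ?u = ?f z / (norm z)\<^sup>2"
      by (simp add: matrix_vector_mult_scaleR power2_eq_square field_simps)
    finally show ?thesis using False by (simp add: field_simps)
  qed
  then show ?thesis using x by auto
qed


lemma real_lin_quad:
  fixes c d :: real
  assumes "\<forall>t. 0 \<le> 2*t*c + t^2*d"
  shows "c = 0"
proof (rule ccontr)
  assume "c \<noteq> 0"
  define k where "k = \<bar>d\<bar> + 1"
  have k: "k > 0" "d \<le> k" by (auto simp: k_def)
  define t where "t = - c / k"
  have "0 \<le> 2*t*c + t^2*d" using assms by blast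
  also have "t^2*d \<le> t^2*k" using k by (simp add: mult_left_mono)
  also have "2*t*c + t^2*k = - (c^2/k)" using k by (simp add: t_def power2_eq_square field_simps)
  finally have "c^2 / k \<le> 0" by simp
  moreover have "c^2/k > 0" using \<open>c \<noteq> 0\<close> k by simp
  ultimately show False by simp
qed

lemma eigen_exists:
  fixes G :: "real^'n^'n"
  assumes sym: "symmetric_mat G"
  shows "\<exists>l. is_eigenvalue G l"
proof -
  obtain x where x1: "norm x = 1" and xm: "\<forall>z. (x \<bullet> (G *v x)) * (norm z)\<^sup>2 \<le> z \<bullet> (G *v z)"
    using quad_min by blast
  define l where "l = x \<bullet> (G *v x)"
  have key: "y \<bullet> (G *v x) - l * (x \<bullet> y) = 0" for y
  proof -
    let ?c = "y \<bullet> (G *v x) - l * (x \<bullet> y)"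
    let ?d = "y \<bullet> (G *v y) - l * (y \<bullet> y)"
    have "0 \<le> 2*t*?c + t^2*?d" for t
    proof -
      let ?z = "x + t *\<^sub>R y"
      have "l * (norm ?z)\<^sup>2 \<le> ?z \<bullet> (G *v ?z)" using xm l_def by blast
      moreover have "(norm ?z)\<^sup>2 = 1 + 2*t*(x \<bullet> y) + t^2 * (y \<bullet> y)"
      proof -
        have xx: "x \<bullet> x = 1" using x1 by (simp add: norm_eq_1)
        have "(norm ?z)\<^sup>2 = ?z \<bullet> ?z" by (rule power2_norm_eq_inner)
        also have "\<dots> = x \<bullet> x + 2*t*(x \<bullet> y) + t^2 * (y \<bullet> y)"
          by (simp add: inner_add_left inner_add_right inner_commute power2_eq_square algebra_simps)
        finally show ?thesis using xx by simp
      qed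
      moreover have "?z \<bullet> (G *v ?z) = l + 2*t*(y \<bullet> (G *v x)) + t^2 * (y \<bullet> (G *v y))"
        using sym_inner[OF sym, of x y]
        by (simp add: l_def matrix_vector_right_distrib matrix_vector_mult_scaleR inner_add_left inner_add_right power2_eq_square algebra_simps)
      ultimately show ?thesis by (simp add: algebra_simps)
    qed
    then show ?thesis using real_lin_quad by blast
  qed
  let ?y = "G *v x - l *\<^sub>R x"
  have "?y \<bullet> ?y = 0"
    using key[of ?y] by (simp add: inner_diff_right inner_commute algebra_simps)
  then have "G *v x = l *\<^sub>R x" by simp
  moreover have "x \<noteq> 0" using x1 by auto
  ultimately show ?thesis unfolding is_eigenvalue_def by blast
qed

lemma eigen_finite:
  fixes G :: "real^'n^'n"
  assumes sym: "symmetric_mat G"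
  shows "finite {l. is_eigenvalue G l}"
proof -
  let ?S = "{l. is_eigenvalue G l}"
  define v where "v l = (SOME v. v \<noteq> 0 \<and> G *v v = l *\<^sub>R v)" for l
  have v: "v l \<noteq> 0 \<and> G *v v l = l *\<^sub>R v l" if "l \<in> ?S" for l
  proof -
    have "\<exists>v. v \<noteq> 0 \<and> G *v v = l *\<^sub>R v" using that unfolding is_eigenvalue_def by simp
    then show ?thesis unfolding v_def by (rule someI_ex)
  qed
  have orth: "v l \<bullet> v m = 0" if "l \<in> ?S" "m \<in> ?S" "l \<noteq> m" for l m
  proof -
    have "l * (v l \<bullet> v m) = (G *v v l) \<bullet> v m" using v[OF that(1)] by simp
    also have "\<dots> = v m \<bullet> (G *v v l)" by (simp add: inner_commute)
    also have "\<dots> = v l \<bullet> (G *v v m)" using sym_inner[OF sym] by simp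
    also have "\<dots> = m * (v l \<bullet> v m)" using v[OF that(2)] by simp
    finally have "(l - m) * (v l \<bullet> v m) = 0" by (simp add: algebra_simps)
    then show ?thesis using that(3) by simp
  qed
  have inj: "inj_on v ?S"
  proof (rule inj_onI)
    fix l m assume lm: "l \<in> ?S" "m \<in> ?S" "v l = v m"
    show "l = m"
    proof (rule ccontr)
      assume "l \<noteq> m"
      then have "v l \<bullet> v l = 0" using orth[OF lm(1,2)] lm(3) by simp
      then show False using v[OF lm(1)] by simp
    qed
  qed
  have "pairwise orthogonal (v ` ?S)"
    unfolding pairwise_def orthogonal_def
  proof (intro ballI impI)
    fix a b assume ab: "a \<in> v ` ?S" "b \<in> v ` ?S" "a \<noteq> b"
    then obtain l m where lm: "l \<in> ?S" "m \<in> ?S" "a = v l" "b = v m" by blast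
    then have "l \<noteq> m" using ab(3) by blast
    then show "a \<bullet> b = 0" using orth[OF lm(1,2)] lm(3,4) by simp
  qed
  then have "finite (v ` ?S)" by (rule pairwise_orthogonal_imp_finite)
  then show ?thesis using inj finite_imageD by blast
qed

lemma psd_not_hyp:
  fixes G :: "real^'n^'n"
  assumes sym: "symmetric_mat G" and psd: "\<forall>\<xi>. 0 \<le> \<xi> \<bullet> (G *v \<xi>)"
  shows "\<not> strictly_hyperbolic G"
proof
  assume h: "strictly_hyperbolic G"
  let ?S = "{l. is_eigenvalue G l}"
  have fin: "finite ?S" by (rule eigen_finite[OF sym])
  obtain l0 where "is_eigenvalue G l0" using eigen_exists[OF sym] by blast
  then have "l0 \<in> ?S" by simp
  then have ne: "?S \<noteq> {}" by blast
  have nn: "0 \<le> l" if "l \<in> ?S" for l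
  proof -
    from that have "is_eigenvalue G l" by simp
    then obtain w where w: "w \<noteq> 0" "G *v w = l *\<^sub>R w" unfolding is_eigenvalue_def by blast
    have "0 \<le> w \<bullet> (G *v w)" using psd by blast
    also have "\<dots> = l * (w \<bullet> w)" using w by simp
    finally have h0: "0 \<le> l * (w \<bullet> w)" .
    have "w \<bullet> w > 0" using w(1) by simp
    show ?thesis
    proof (rule ccontr)
      assume "\<not> 0 \<le> l"
      then have "l * (w \<bullet> w) < 0" using \<open>w \<bullet> w > 0\<close> by (simp add: mult_neg_pos)
      then show False using h0 by simp
    qed
  qed
  have mn: "0 \<le> lambda_min G" unfolding lambda_min_def using fin ne nn by simp
  have "lambda_min G \<in> ?S" unfolding lambda_min_def using fin ne by (rule Min_in)
  then have "lambda_min G \<le> lambda_max G" unfolding lambda_max_def by (rule Max_ge[OF fin])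
  then have mx: "0 \<le> lambda_max G" using mn by linarith
  have "lambda_max G / lambda_min G \<ge> 0" by (rule divide_nonneg_nonneg[OF mx mn])
  then have "- lambda_max G / lambda_min G \<le> 0" by simp
  moreover obtain M where M: "M > 0" "1/M < - lambda_max G / lambda_min G"
    using h unfolding strictly_hyperbolic_def by blast
  moreover have "1/M > 0" using M(1) by simp
  ultimately show False by linarith
qed

lemma pd_in_K:
  fixes Q :: "real^'n^'n"
  assumes sym: "symmetric_mat Q" and pd: "\<forall>\<xi>. \<xi> \<noteq> 0 \<longrightarrow> 0 < \<xi> \<bullet> (Q *v \<xi>)"
  shows "\<exists>C>0. Q \<in> K C"
proof -
  obtain x where x1: "norm x = 1" and xm: "\<forall>z. (x \<bullet> (Q *v x)) * (norm z)\<^sup>2 \<le> z \<bullet> (Q *v z)"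
    using quad_min by blast
  define m where "m = x \<bullet> (Q *v x)"
  have "x \<noteq> 0" using x1 by auto
  then have m: "m > 0" using pd m_def by blast
  obtain y where xm2: "\<forall>z. (y \<bullet> ((-Q) *v y)) * (norm z)\<^sup>2 \<le> z \<bullet> ((-Q) *v z)"
    using quad_min by blast
  define B where "B = - (y \<bullet> ((-Q) *v y))"
  have up: "z \<bullet> (Q *v z) \<le> B * (norm z)\<^sup>2" for z
  proof -
    have "(-Q) *v z = - (Q *v z)" by (simp add: matrix_vector_mult_def vec_eq_iff sum_negf)
    then show ?thesis using xm2[rule_format, of z] B_def by simp
  qed
  define C where "C = max (1/m) (max B 1)"
  have C: "C > 0" "1/m \<le> C" "B \<le> C" by (auto simp: C_def)
  have "inverse C \<le> inverse (1/m)"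
    by (rule le_imp_inverse_le) (use C m in auto)
  then have ic: "inverse C \<le> m" by simp
  have "Q \<in> K C" unfolding K_def
  proof (intro CollectI conjI allI sym)
    fix \<xi> :: "real^'n"
    show "inverse C * (norm \<xi>)\<^sup>2 \<le> \<xi> \<bullet> (Q *v \<xi>)"
    proof -
      have "inverse C * (norm \<xi>)\<^sup>2 \<le> m * (norm \<xi>)\<^sup>2" by (rule mult_right_mono[OF ic]) simp
      also have "\<dots> \<le> \<xi> \<bullet> (Q *v \<xi>)" using xm m_def by blast
      finally show ?thesis .
    qed
    show "\<xi> \<bullet> (Q *v \<xi>) \<le> C * (norm \<xi>)\<^sup>2"
    proof -
      have "B * (norm \<xi>)\<^sup>2 \<le> C * (norm \<xi>)\<^sup>2" by (rule mult_right_mono[OF C(3)]) simp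
      with up[of \<xi>] show ?thesis by linarith
    qed
  qed
  then show ?thesis using C by blast
qed


lemma trace_lin_right:
  fixes F A B :: "real^'n^'n"
  shows "trace (F ** (a *\<^sub>R A + b *\<^sub>R B)) = a * trace (F ** A) + b * trace (F ** B)"
  by (simp add: trace_def matrix_matrix_mult_def sum.distrib sum_distrib_left algebra_simps)

lemma trace_lin_left:
  fixes F1 F2 Q :: "real^'n^'n"
  shows "trace ((a *\<^sub>R F1 + b *\<^sub>R F2) ** Q) = a * trace (F1 ** Q) + b * trace (F2 ** Q)"
  by (simp add: trace_def matrix_matrix_mult_def sum.distrib sum_distrib_left algebra_simps)

lemma trace_outer:
  fixes G :: "real^'n^'n"
  shows "trace (G ** (\<chi> i j. \<xi>$i * \<xi>$j)) = \<xi> \<bullet> (G *v \<xi>)"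
  by (simp add: trace_def matrix_matrix_mult_def matrix_vector_mult_def inner_vec_def
      sum_distrib_left algebra_simps)

lemma outer_mult:
  fixes \<xi> :: "real^'n"
  shows "(\<chi> i j. \<xi>$i * \<xi>$j) *v \<eta> = (\<xi> \<bullet> \<eta>) *\<^sub>R \<xi>"
  by (simp add: vec_eq_iff matrix_vector_mult_def inner_vec_def sum_distrib_left algebra_simps)

lemma transpose_lin:
  fixes A B :: "real^'n^'n"
  shows "transpose (u *\<^sub>R A + v *\<^sub>R B) = u *\<^sub>R transpose A + v *\<^sub>R transpose B"
  by (simp add: transpose_def vec_eq_iff)

lemma scale_mv:
  fixes A :: "real^'n^'n"
  shows "(c *\<^sub>R A) *v x = c *\<^sub>R (A *v x)"
  by (simp add: vec_eq_iff matrix_vector_mult_def sum_distrib_left algebra_simps)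

lemma real_eps:
  fixes a b :: real
  assumes "\<forall>e>0. 0 \<le> a + e * b"
  shows "0 \<le> a"
proof (rule ccontr)
  assume a: "\<not> 0 \<le> a"
  show False
  proof (cases "b \<le> 0")
    case True
    have "0 \<le> a + 1 * b" by (rule assms[rule_format]) simp
    then show False using a True by simp
  next
    case False
    have "0 \<le> a + (- a / (2*b)) * b" by (rule assms[rule_format]) (use a False in \<open>auto intro: divide_neg_pos\<close>)
    also have "(- a / (2*b)) * b = - a / 2" using False by (simp add: field_simps)
    finally show False using a by simp
  qed
qed

theorem lemma5p2:
  fixes F1 F2 :: "real^'n^'n"
  assumes "symmetric_mat F1" and "symmetric_mat F2"
    and "\<forall>\<alpha> \<beta>::real. (\<alpha>, \<beta>) \<noteq> (0, 0) \<longrightarrow> strictly_hyperbolic (\<alpha> *\<^sub>R F1 + \<beta> *\<^sub>R F2)"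
  shows "\<exists>C>0. \<exists>Q. Q \<in> K C \<and> trace (F1 ** Q) = 0 \<and> trace (F2 ** Q) = 0"
proof -
  define P :: "(real^'n^'n) set" where
    "P = {Q. symmetric_mat Q \<and> (\<forall>\<xi>. \<xi> \<noteq> 0 \<longrightarrow> 0 < \<xi> \<bullet> (Q *v \<xi>))}"
  define T where "T Q = (trace (F1 ** Q), trace (F2 ** Q))" for Q :: "real^'n^'n"
  have convP: "convex P" unfolding convex_def
  proof (intro ballI allI impI)
    fix A B :: "real^'n^'n" and u v :: real
    assume A: "A \<in> P" and B: "B \<in> P" and uv: "0 \<le> u" "0 \<le> v" "u + v = 1"
    have sym: "symmetric_mat (u *\<^sub>R A + v *\<^sub>R B)"
      using A B by (simp add: P_def symmetric_mat_def transpose_lin)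
    have "0 < \<xi> \<bullet> ((u *\<^sub>R A + v *\<^sub>R B) *v \<xi>)" if "\<xi> \<noteq> 0" for \<xi>
    proof -
      have eq: "\<xi> \<bullet> ((u *\<^sub>R A + v *\<^sub>R B) *v \<xi>) = u * (\<xi> \<bullet> (A *v \<xi>)) + v * (\<xi> \<bullet> (B *v \<xi>))"
        by (simp add: matrix_vector_mult_add_rdistrib scale_mv inner_add_right)
      have a: "0 < \<xi> \<bullet> (A *v \<xi>)" and b: "0 < \<xi> \<bullet> (B *v \<xi>)" using A B that unfolding P_def by blast+
      show ?thesis
      proof (cases "u = 0")
        case True then show ?thesis using eq uv b by simp
      next
        case False then have "u > 0" using uv by simp
        have "0 < u * (\<xi> \<bullet> (A *v \<xi>))" using \<open>u > 0\<close> a by (rule mult_pos_pos)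
        moreover have "0 \<le> v * (\<xi> \<bullet> (B *v \<xi>))" using uv(2) b by simp
        ultimately show ?thesis using eq by linarith
      qed
    qed
    then show "u *\<^sub>R A + v *\<^sub>R B \<in> P" using sym by (simp add: P_def)
  qed
  have convS: "convex (T ` P)" unfolding convex_def
  proof (intro ballI allI impI)
    fix x y :: "real \<times> real" and u v :: real
    assume x: "x \<in> T ` P" and y: "y \<in> T ` P" and uv: "0 \<le> u" "0 \<le> v" "u + v = 1"
    obtain A B where AB: "A \<in> P" "B \<in> P" "x = T A" "y = T B" using x y by blast
    have "u *\<^sub>R A + v *\<^sub>R B \<in> P" by (rule convexD[OF convP AB(1) AB(2) uv])
    moreover have "u *\<^sub>R x + v *\<^sub>R y = T (u *\<^sub>R A + v *\<^sub>R B)"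
      using AB by (simp add: T_def trace_lin_right)
    ultimately show "u *\<^sub>R x + v *\<^sub>R y \<in> T ` P" by blast
  qed
  have "0 \<in> T ` P"
  proof (rule ccontr)
    assume "0 \<notin> T ` P"
    then obtain a where a: "a \<noteq> 0" "\<forall>x\<in>T ` P. 0 \<le> inner a x"
      using separating_hyperplane_set_0[OF convS] by blast
    obtain a1 a2 where a12: "a = (a1, a2)" by (cases a)
    define G where "G = a1 *\<^sub>R F1 + a2 *\<^sub>R F2"
    have "(a1, a2) \<noteq> (0, 0)" using a(1) a12 by (simp add: zero_prod_def)
    then have hyp: "strictly_hyperbolic G" using assms(3) G_def by blast
    then have symG: "symmetric_mat G" by (simp add: strictly_hyperbolic_def)
    have trG: "0 \<le> trace (G ** Q)" if "Q \<in> P" for Q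
    proof -
      have "0 \<le> inner a (T Q)" using a(2) that by blast
      then show ?thesis by (simp add: a12 T_def G_def trace_lin_left)
    qed
    have "0 \<le> \<xi> \<bullet> (G *v \<xi>)" for \<xi>
    proof (rule real_eps[where b = "trace G"], intro allI impI)
      fix e :: real assume e: "e > 0"
      define Om where "Om = ((\<chi> i j. \<xi>$i * \<xi>$j) :: real^'n^'n)"
      have "1 *\<^sub>R Om + e *\<^sub>R mat 1 \<in> P" unfolding P_def
      proof (intro CollectI conjI allI impI)
        show "symmetric_mat (1 *\<^sub>R Om + e *\<^sub>R mat 1)"
          by (simp add: symmetric_mat_def transpose_lin Om_def transpose_def vec_eq_iff mult.commute mat_def)
        fix \<eta> :: "real^'n" assume "\<eta> \<noteq> 0"
        have "\<eta> \<bullet> ((1 *\<^sub>R Om + e *\<^sub>R mat 1) *v \<eta>) = (\<xi> \<bullet> \<eta>)\<^sup>2 + e * (\<eta> \<bullet> \<eta>)"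
        proof -
          have "(1 *\<^sub>R Om + e *\<^sub>R mat 1) *v \<eta> = (\<xi> \<bullet> \<eta>) *\<^sub>R \<xi> + e *\<^sub>R \<eta>"
            by (simp only: matrix_vector_mult_add_rdistrib scale_mv Om_def outer_mult matrix_vector_mul_lid scaleR_one)
          then show ?thesis by (simp add: inner_add_right power2_eq_square inner_commute[of \<eta> \<xi>])
        qed
        moreover have "0 < \<eta> \<bullet> \<eta>" using \<open>\<eta> \<noteq> 0\<close> by simp
        ultimately show "0 < \<eta> \<bullet> ((1 *\<^sub>R Om + e *\<^sub>R mat 1) *v \<eta>)"
          using e by (simp add: add_nonneg_pos)
      qed
      then have "0 \<le> trace (G ** (1 *\<^sub>R Om + e *\<^sub>R mat 1))" by (rule trG)
      also have "\<dots> = \<xi> \<bullet> (G *v \<xi>) + e * trace G"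
        by (simp only: trace_lin_right) (simp add: Om_def trace_outer)
      finally show "0 \<le> \<xi> \<bullet> (G *v \<xi>) + e * trace G" .
    qed
    then show False using psd_not_hyp[OF symG] hyp by blast
  qed
  then obtain Q where Q: "Q \<in> P" "T Q = 0" by (metis imageE)
  have "symmetric_mat Q" "\<forall>\<xi>. \<xi> \<noteq> 0 \<longrightarrow> 0 < \<xi> \<bullet> (Q *v \<xi>)" using Q(1) unfolding P_def by blast+
  then obtain C where "C > 0" "Q \<in> K C" using pd_in_K by blast
  moreover have "trace (F1 ** Q) = 0" "trace (F2 ** Q) = 0" using Q(2) by (simp_all add: T_def zero_prod_def)
  ultimately show ?thesis by blast
qed

end
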